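(* For every graph $G$ there exists a pot $P$ with $G\in\mathcal{O}(P)$, $\#\Sigma(P)=1$, and $\#P=T_1(G)$.
   Context: Fix a set $\Sigma$ of symbols (bond-edge types) and a disjoint copy $\hat\Sigma=\{\hat a:a\in\Sigma\}$ with $\hat{\hat a}=a$; elements of $\Sigma\cup\hat\Sigma$ are cohesive-end types. A tile is a finite multiset of cohesive-end types. A pot is a finite set $P$ of tiles such that whenever $x$ occurs in a tile of $P$, $\hat x$ occurs in some tile of $P$; $\#P$ is the number of tiles of $P$ and $\Sigma(P)$ is the set of bond-edge types $a\in\Sigma$ such that $a$ or $\hat a$ occurs in a tile of $P$. Graphs are finite, loops and multiple edges allowed. An assembly design of $G$ labels the half-edges of $G$ by cohesive-end types so that the two half-edges of each edge get complementary labels $x,\hat x$; $t_v$ is the multiset of labels at vertex $v$, $P_\lambda(G)=\{t_v:v\in V(G)\}$, and $G\in\mathcal{O}(P)$ ($P$ realizes $G$) means some assembly design $\lambda$ has $P_\lambda(G)\subseteq P$. $T_1(G)=\min\{\#P: G\in\mathcal{O}(P)\}$. *)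

theory Defs
  imports Main "HOL-Library.Multiset"
begin

text \<open>Cohesive-end types: a pair (a, h) with a a bond-edge type (symbol) and
  h = True meaning the hatted copy.\<close>
type_synonym 's cend = "'s \<times> bool"
type_synonym 's tile = "'s cend multiset"

definition hat :: "'s cend \<Rightarrow> 's cend" where
  "hat x = (fst x, \<not> snd x)"

definition is_pot :: "'s tile set \<Rightarrow> bool" where
  "is_pot P \<longleftrightarrow> finite P \<and>
     (\<forall>t\<in>P. \<forall>x. x \<in># t \<longrightarrow> (\<exists>t'\<in>P. hat x \<in># t'))"

definition bond_types :: "'s tile set \<Rightarrow> 's set" where
  "bond_types P = {a. \<exists>t\<in>P. (a, False) \<in># t \<or> (a, True) \<in># t}"

text \<open>A finite multigraph (loops and multiple edges allowed): vertex set V,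
  edge set E, each edge e has two ends; half-edge (e,False) sits at fst (ends e),
  half-edge (e,True) at snd (ends e).\<close>
definition graph :: "'v set \<Rightarrow> 'e set \<Rightarrow> ('e \<Rightarrow> 'v \<times> 'v) \<Rightarrow> bool" where
  "graph V E ends \<longleftrightarrow> finite V \<and> finite E \<and> (\<forall>e\<in>E. fst (ends e) \<in> V \<and> snd (ends e) \<in> V)"

definition half_end :: "('e \<Rightarrow> 'v \<times> 'v) \<Rightarrow> 'e \<times> bool \<Rightarrow> 'v" where
  "half_end ends h = (if snd h then snd (ends (fst h)) else fst (ends (fst h)))"

definition half_edges_at :: "'e set \<Rightarrow> ('e \<Rightarrow> 'v \<times> 'v) \<Rightarrow> 'v \<Rightarrow> ('e \<times> bool) set" where
  "half_edges_at E ends v = {h. fst h \<in> E \<and> half_end ends h = v}"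

definition assembly_design ::
  "'e set \<Rightarrow> ('e \<times> bool \<Rightarrow> 's cend) \<Rightarrow> bool" where
  "assembly_design E lam \<longleftrightarrow> (\<forall>e\<in>E. lam (e, True) = hat (lam (e, False)))"

definition vtile ::
  "'e set \<Rightarrow> ('e \<Rightarrow> 'v \<times> 'v) \<Rightarrow> ('e \<times> bool \<Rightarrow> 's cend) \<Rightarrow> 'v \<Rightarrow> 's tile" where
  "vtile E ends lam v = image_mset lam (mset_set (half_edges_at E ends v))"

definition design_pot ::
  "'v set \<Rightarrow> 'e set \<Rightarrow> ('e \<Rightarrow> 'v \<times> 'v) \<Rightarrow> ('e \<times> bool \<Rightarrow> 's cend) \<Rightarrow> 's tile set" where
  "design_pot V E ends lam = vtile E ends lam ` V"

definition realizes ::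
  "'s tile set \<Rightarrow> 'v set \<Rightarrow> 'e set \<Rightarrow> ('e \<Rightarrow> 'v \<times> 'v) \<Rightarrow> bool" where
  "realizes P V E ends \<longleftrightarrow>
     (\<exists>lam. assembly_design E lam \<and> design_pot V E ends lam \<subseteq> P)"

definition T1 :: "'s itself \<Rightarrow> 'v set \<Rightarrow> 'e set \<Rightarrow> ('e \<Rightarrow> 'v \<times> 'v) \<Rightarrow> nat" where
  "T1 _ V E ends = (LEAST n. \<exists>P :: 's tile set. is_pot P \<and> realizes P V E ends \<and> card P = n)"

end

theory Submission
  imports Defs
begin

lemma hat_hat[simp]: "hat (hat x) = x"
  by (simp add: hat_def)

lemma fin_he: "finite E \<Longrightarrow> finite (half_edges_at E ends v)"
proof -
  assume "finite E"
  hence "finite (E \<times> (UNIV :: bool set))" by simp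
  moreover have "half_edges_at E ends v \<subseteq> E \<times> UNIV"
    by (auto simp: half_edges_at_def)
  ultimately show ?thesis by (rule finite_subset[rotated])
qed

lemma designpot_is_pot:
  assumes g: "graph V E ends" and ad: "assembly_design E lam"
  shows "is_pot (design_pot V E ends lam)"
  unfolding is_pot_def
proof (intro conjI ballI allI impI)
  show "finite (design_pot V E ends lam)"
    using g by (simp add: design_pot_def graph_def)
next
  fix t x assume t: "t \<in> design_pot V E ends lam" and x: "x \<in># t"
  then obtain v where v: "v \<in> V" and tv: "t = vtile E ends lam v"
    by (auto simp: design_pot_def)
  have fE: "finite E" using g by (simp add: graph_def)
  have fh: "finite (half_edges_at E ends v)" using fin_he[OF fE] .
  from x tv obtain h where h: "h \<in> half_edges_at E ends v" and xh: "x = lam h"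
    using fh by (auto simp: vtile_def)
  obtain e b where hb: "h = (e, b)" by (cases h)
  have eE: "e \<in> E" using h hb by (simp add: half_edges_at_def)
  define h' where "h' = (e, \<not> b)"
  have "half_end ends h' \<in> V" using g eE by (auto simp: graph_def half_end_def h'_def)
  moreover have "hat x = lam h'"
    using ad eE by (cases b) (auto simp: assembly_design_def xh hb h'_def)
  moreover have "h' \<in> half_edges_at E ends (half_end ends h')"
    using eE by (simp add: half_edges_at_def h'_def)
  moreover have "finite (half_edges_at E ends (half_end ends h'))" using fin_he[OF fE] .
  ultimately have "hat x \<in># vtile E ends lam (half_end ends h')"
    by (simp add: vtile_def)
  moreover have "vtile E ends lam (half_end ends h') \<in> design_pot V E ends lam"
    using \<open>half_end ends h' \<in> V\<close> by (simp add: design_pot_def)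
  ultimately show "\<exists>t'\<in>design_pot V E ends lam. hat x \<in># t'" by blast
qed

definition collapse :: "'s \<Rightarrow> 's cend \<Rightarrow> 's cend" where
  "collapse a x = (a, snd x)"

lemma collapse_hat: "collapse a (hat x) = hat (collapse a x)"
  by (simp add: collapse_def hat_def)

lemma collapse_pot:
  assumes "is_pot P" shows "is_pot (image_mset (collapse a) ` P)"
  unfolding is_pot_def
proof (intro conjI ballI allI impI)
  show "finite (image_mset (collapse a) ` P)" using assms by (simp add: is_pot_def)
next
  fix t x assume t: "t \<in> image_mset (collapse a) ` P" and x: "x \<in># t"
  then obtain s where s: "s \<in> P" and ts: "t = image_mset (collapse a) s" by auto
  then obtain y where y: "y \<in># s" and xy: "x = collapse a y" using x by auto
  then obtain s' where "s' \<in> P" "hat y \<in># s'" using assms s unfolding is_pot_def by blast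
  thus "\<exists>t'\<in>image_mset (collapse a) ` P. hat x \<in># t'"
  proof -
    assume a1: "s' \<in> P" and a2: "hat y \<in># s'"
    have "image_mset (collapse a) s' \<in> image_mset (collapse a) ` P" using a1 by simp
    moreover have "hat x \<in># image_mset (collapse a) s'"
    proof -
      have "hat x = collapse a (hat y)" using xy collapse_hat[of a y] by simp
      thus ?thesis using a2 by simp
    qed
    ultimately show ?thesis by blast
  qed
qed

lemma collapse_realizes:
  assumes "realizes P V E ends" shows "realizes (image_mset (collapse a) ` P) V E ends"
proof -
  obtain lam where ad: "assembly_design E lam" and sub: "design_pot V E ends lam \<subseteq> P"
    using assms by (auto simp: realizes_def)
  have "assembly_design E (collapse a \<circ> lam)"
    using ad by (simp add: assembly_design_def collapse_hat)
  moreover have "design_pot V E ends (collapse a \<circ> lam) = image_mset (collapse a) ` design_pot V E ends lam"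
    by (auto simp: design_pot_def vtile_def multiset.map_comp image_image)
  ultimately show ?thesis using sub unfolding realizes_def by blast
qed

theorem lemma1:
  fixes V :: "'v set" and E :: "'e set" and ends :: "'e \<Rightarrow> 'v \<times> 'v"
  assumes "graph V E ends" and "E \<noteq> {}"
  shows "\<exists>P :: 's tile set. is_pot P \<and> realizes P V E ends
            \<and> card (bond_types P) = 1 \<and> card P = T1 TYPE('s) V E ends"
proof -
  define a0 :: 's where "a0 = undefined"
  define lam0 :: "'e \<times> bool \<Rightarrow> 's cend" where "lam0 = (\<lambda>h. (a0, snd h))"
  have ad0: "assembly_design E lam0" by (simp add: assembly_design_def lam0_def hat_def)
  have r0: "realizes (design_pot V E ends lam0) V E ends"
    unfolding realizes_def using ad0 by blast
  have ex: "\<exists>n. \<exists>P :: 's tile set. is_pot P \<and> realizes P V E ends \<and> card P = n"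
    using designpot_is_pot[OF assms(1) ad0] r0 by blast
  define n where "n = T1 TYPE('s) V E ends"
  have "\<exists>P :: 's tile set. is_pot P \<and> realizes P V E ends \<and> card P = n"
    unfolding n_def T1_def using ex by (rule LeastI_ex)
  then obtain P :: "'s tile set" where P: "is_pot P" "realizes P V E ends" "card P = n" by blast
  define P' where "P' = image_mset (collapse a0) ` P"
  have P'pot: "is_pot P'" unfolding P'_def by (rule collapse_pot[OF P(1)])
  have P'r: "realizes P' V E ends" unfolding P'_def by (rule collapse_realizes[OF P(2)])
  have finP: "finite P" using P(1) by (simp add: is_pot_def)
  have le1: "card P' \<le> card P" unfolding P'_def using finP by (rule card_image_le)
  have "\<exists>Q :: 's tile set. is_pot Q \<and> realizes Q V E ends \<and> card Q = card P'"
    using P'pot P'r by blast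
  hence le2: "n \<le> card P'" unfolding n_def T1_def by (rule Least_le)
  have cP: "card P' = n" using le1 le2 P(3) by linarith
  obtain lam where ad: "assembly_design E lam" and sub: "design_pot V E ends lam \<subseteq> P"
    using P(2) unfolding realizes_def by blast
  obtain e where eE: "e \<in> E" using assms(2) by blast
  have fE: "finite E" using assms(1) by (simp add: graph_def)
  define v where "v = fst (ends e)"
  have vV: "v \<in> V" using assms(1) eE by (simp add: graph_def v_def)
  have he: "(e, False) \<in> half_edges_at E ends v" using eE by (simp add: half_edges_at_def half_end_def v_def)
  have fh: "finite (half_edges_at E ends v)" using fin_he[OF fE] .
  have A: "lam (e, False) \<in># vtile E ends lam v" using he fh by (simp add: vtile_def)
  have B: "vtile E ends lam v \<in> P" using sub vV unfolding design_pot_def by blast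
  have m0: "collapse a0 (lam (e, False)) \<in># image_mset (collapse a0) (vtile E ends lam v)"
    using A unfolding set_image_mset by (rule imageI)
  have p: "image_mset (collapse a0) (vtile E ends lam v) \<in> P'"
    unfolding P'_def using B by (rule imageI)
  have ce: "collapse a0 (lam (e, False)) = (a0, snd (lam (e, False)))" by (simp add: collapse_def)
  have m: "(a0, snd (lam (e, False))) \<in># image_mset (collapse a0) (vtile E ends lam v)"
    using m0 unfolding ce .
  have gen: "a0 \<in> bond_types P'" if h1: "(a0, b) \<in># T" and h2: "T \<in> P'" for b T
  proof -
    have "(a0, False) \<in># T \<or> (a0, True) \<in># T" using h1 by (cases b) simp_all
    hence "\<exists>t\<in>P'. (a0, False) \<in># t \<or> (a0, True) \<in># t" using h2 by blast
    thus ?thesis unfolding bond_types_def by simp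
  qed
  have a0in: "a0 \<in> bond_types P'" by (rule gen[OF m p])
  have sub1: "bond_types P' \<subseteq> {a0}"
  proof
    fix a assume "a \<in> bond_types P'"
    then obtain t c where t: "t \<in> P'" and tc: "(a, c) \<in># t"
      unfolding bond_types_def by blast
    then obtain s where "t = image_mset (collapse a0) s" unfolding P'_def by blast
    with tc obtain y where "(a, c) = collapse a0 y" by auto
    hence "a = a0" by (simp add: collapse_def)
    thus "a \<in> {a0}" by simp
  qed
  have "bond_types P' = {a0}" using a0in sub1 by blast
  hence "card (bond_types P') = 1" by simp
  hence "is_pot P' \<and> realizes P' V E ends \<and> card (bond_types P') = 1 \<and> card P' = T1 TYPE('s) V E ends"
    using P'pot P'r cP unfolding n_def by blast
  thus ?thesis by (rule exI)
qed

end
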